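(* Let $K$ be a field, $\mathcal A$ a $K$-algebra, $\vartheta$ any one of the four types (left, right, pre-two-sided, two-sided), and $V$ a $K$-subspace of $\mathcal A$ such that every element of $\sqrt V$ is algebraic over $K$ and $I_{\vartheta,V}=0$. Then $V$ is a $\vartheta$-Mathieu subspace of $\mathcal A$ if and only if $V$ contains no nonzero idempotent. Consequently, if $\vartheta\neq$ pre-two-sided and $\mathcal A$ is an algebraic $K$-algebra with no non-trivial $\vartheta$-ideals, then a non-trivial $K$-subspace $M$ of $\mathcal A$ is a $\vartheta$-Mathieu subspace of $\mathcal A$ if and only if $M$ contains no nonzero idempotent of $\mathcal A$.
   Context: All algebras are associative and unital. $\sqrt S$ is the set of $a\in\mathcal A$ with $a^m\in S$ for all sufficiently large $m$. An idempotent is $e$ with $e^2=e$. A subspace is non-trivial if it is neither $0$ nor $\mathcal A$. $\mathcal A$ is algebraic if every element is algebraic over $K$. A $\vartheta$-ideal is a left ideal if $\vartheta$ = left, right ideal if $\vartheta$ = right, two-sided ideal if $\vartheta$ is pre-two-sided or two-sided. For $\vartheta\neq$ pre-two-sided, $I_{\vartheta,V}$ is the largest $\vartheta$-ideal of $\mathcal A$ contained in $V$ (the sum of all $\vartheta$-ideals contained in $V$); for $\vartheta$ = pre-two-sided, $I_{\vartheta,V}$ is the sum of the largest left ideal contained in $V$ and the largest right ideal contained in $V$. Mathieu subspaces: a $K$-subspace $V$ is a left (resp. right) Mathieu subspace if whenever $a^m\in V$ for all $m\ge1$, then for every $b\in\mathcal A$, $ba^m\in V$ (resp. $a^mb\in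 V$) for all sufficiently large $m$; pre-two-sided if both left and right; two-sided if whenever $a^m\in V$ for all $m\ge1$, for all $b,c$, $ba^mc\in V$ for all sufficiently large $m$. *)

theory Defs
  imports Main "HOL-Computational_Algebra.Polynomial"
begin

definition is_algebra :: "('k::field \<Rightarrow> 'a::ring_1 \<Rightarrow> 'a) \<Rightarrow> bool" where
  "is_algebra scale \<longleftrightarrow> vector_space scale \<and>
     (\<forall>c x y. scale c (x * y) = scale c x * y \<and> scale c (x * y) = x * scale c y)"

definition poly_eval :: "('k::field \<Rightarrow> 'a::ring_1 \<Rightarrow> 'a) \<Rightarrow> 'k poly \<Rightarrow> 'a \<Rightarrow> 'a" where
  "poly_eval scale p a = (\<Sum>i\<le>degree p. scale (coeff p i) (a ^ i))"

definition algebraic_elem :: "('k::field \<Rightarrow> 'a::ring_1 \<Rightarrow> 'a) \<Rightarrow> 'a \<Rightarrow> bool" where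
  "algebraic_elem scale a \<longleftrightarrow> (\<exists>p::'k poly. p \<noteq> 0 \<and> poly_eval scale p a = 0)"

definition algebraic_algebra :: "('k::field \<Rightarrow> 'a::ring_1 \<Rightarrow> 'a) \<Rightarrow> bool" where
  "algebraic_algebra scale \<longleftrightarrow> (\<forall>a. algebraic_elem scale a)"

definition radical :: "'a::ring_1 set \<Rightarrow> 'a set" where
  "radical S = {a. \<exists>N. \<forall>m\<ge>N. a ^ m \<in> S}"

definition idempotent :: "'a::ring_1 \<Rightarrow> bool" where
  "idempotent e \<longleftrightarrow> e * e = e"

datatype mtype = LeftT | RightT | PreTwoSidedT | TwoSidedT

definition left_ideal :: "('k::field \<Rightarrow> 'a::ring_1 \<Rightarrow> 'a) \<Rightarrow> 'a set \<Rightarrow> bool" where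
  "left_ideal scale I \<longleftrightarrow> module.subspace scale I \<and> (\<forall>b\<in>UNIV. \<forall>a\<in>I. b * a \<in> I)"

definition right_ideal :: "('k::field \<Rightarrow> 'a::ring_1 \<Rightarrow> 'a) \<Rightarrow> 'a set \<Rightarrow> bool" where
  "right_ideal scale I \<longleftrightarrow> module.subspace scale I \<and> (\<forall>b\<in>UNIV. \<forall>a\<in>I. a * b \<in> I)"

definition two_sided_ideal :: "('k::field \<Rightarrow> 'a::ring_1 \<Rightarrow> 'a) \<Rightarrow> 'a set \<Rightarrow> bool" where
  "two_sided_ideal scale I \<longleftrightarrow> left_ideal scale I \<and> right_ideal scale I"

definition theta_ideal :: "mtype \<Rightarrow> ('k::field \<Rightarrow> 'a::ring_1 \<Rightarrow> 'a) \<Rightarrow> 'a set \<Rightarrow> bool" where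
  "theta_ideal t scale I = (case t of
       LeftT \<Rightarrow> left_ideal scale I
     | RightT \<Rightarrow> right_ideal scale I
     | PreTwoSidedT \<Rightarrow> two_sided_ideal scale I
     | TwoSidedT \<Rightarrow> two_sided_ideal scale I)"

definition I_theta :: "mtype \<Rightarrow> ('k::field \<Rightarrow> 'a::ring_1 \<Rightarrow> 'a) \<Rightarrow> 'a set \<Rightarrow> 'a set" where
  "I_theta t scale V = (if t = PreTwoSidedT
     then module.span scale (\<Union>{I. left_ideal scale I \<and> I \<subseteq> V} \<union>
                            \<Union>{I. right_ideal scale I \<and> I \<subseteq> V})
     else module.span scale (\<Union>{I. theta_ideal t scale I \<and> I \<subseteq> V}))"

definition left_mathieu :: "'a::ring_1 set \<Rightarrow> bool" where
  "left_mathieu V \<longleftrightarrow> (\<forall>a. (\<forall>m\<ge>1. a ^ m \<in> V) \<longrightarrow> (\<forall>b. \<exists>N. \<forall>m\<ge>N. b * a ^ m \<in> V))"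

definition right_mathieu :: "'a::ring_1 set \<Rightarrow> bool" where
  "right_mathieu V \<longleftrightarrow> (\<forall>a. (\<forall>m\<ge>1. a ^ m \<in> V) \<longrightarrow> (\<forall>b. \<exists>N. \<forall>m\<ge>N. a ^ m * b \<in> V))"

definition two_sided_mathieu :: "'a::ring_1 set \<Rightarrow> bool" where
  "two_sided_mathieu V \<longleftrightarrow>
     (\<forall>a. (\<forall>m\<ge>1. a ^ m \<in> V) \<longrightarrow> (\<forall>b c. \<exists>N. \<forall>m\<ge>N. b * a ^ m * c \<in> V))"

text \<open>theta-Mathieu subspace (V is assumed to be a K-subspace separately).\<close>
definition theta_mathieu :: "mtype \<Rightarrow> 'a::ring_1 set \<Rightarrow> bool" where
  "theta_mathieu t V = (case t of
       LeftT \<Rightarrow> left_mathieu V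
     | RightT \<Rightarrow> right_mathieu V
     | PreTwoSidedT \<Rightarrow> left_mathieu V \<and> right_mathieu V
     | TwoSidedT \<Rightarrow> two_sided_mathieu V)"

end

theory Submission imports Defs begin

locale alg = vector_space scale for scale :: "'k::field \<Rightarrow> 'a::ring_1 \<Rightarrow> 'a" +
  assumes ml: "scale c (x*y) = scale c x * y" and mr: "scale c (x*y) = x * scale c y"
begin

lemma pow_comm: "(x::'a) * y = y * x \<Longrightarrow> x ^ n * y ^ m = y ^ m * x ^ n"
  by (metis power_commuting_commutes)

lemma nil:
  assumes V: "subspace V" and idem: "\<forall>e\<in>V. e*e = e \<longrightarrow> e = 0"
    and pw: "\<forall>m\<ge>1. a^m \<in> V" and p: "p \<noteq> 0"
    and ev: "(\<Sum>i\<le>degree p. scale (coeff p i) (a^i)) = 0"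
  shows "\<exists>k. a^k = 0"
proof -
  define k where "k = (LEAST i. coeff p i \<noteq> 0)"
  have ex: "coeff p (degree p) \<noteq> 0" using p by simp
  have ck: "coeff p k \<noteq> 0" unfolding k_def by (rule LeastI[where P="\<lambda>i. coeff p i \<noteq> 0", OF ex])
  have kd: "k \<le> degree p" unfolding k_def by (rule Least_le[where P="\<lambda>i. coeff p i \<noteq> 0", OF ex])
  have below: "\<And>i. i < k \<Longrightarrow> coeff p i = 0" unfolding k_def using not_less_Least by blast
  define d where "d = degree p"
  have split: "{..d} = {..<k} \<union> ({k} \<union> {k<..d})" using kd d_def by auto
  have z: "(\<Sum>i\<in>{..<k}. scale (coeff p i) (a^i)) = 0" using below by simp
  have eq0: "scale (coeff p k) (a^k) + (\<Sum>i\<in>{k<..d}. scale (coeff p i) (a^i)) = 0"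
    using ev unfolding d_def[symmetric] split
    by (subst (asm) sum.union_disjoint, auto simp: z)
  define w where "w = (\<Sum>i\<in>{k<..d}. scale (- coeff p i / coeff p k) (a^(i-k-1)))"
  have aw: "a^(Suc k) * w = a^k"
  proof -
    have "a^(Suc k) * w = (\<Sum>i\<in>{k<..d}. scale (- coeff p i / coeff p k) (a^(Suc k) * a^(i-k-1)))"
      unfolding w_def by (simp add: sum_distrib_left mr)
    also have "\<dots> = (\<Sum>i\<in>{k<..d}. scale (- 1 / coeff p k) (scale (coeff p i) (a^i)))"
    proof (rule sum.cong)
      fix i assume "i \<in> {k<..d}"
      then have "Suc k + (i-k-1) = i" by auto
      then have "a^(Suc k) * a^(i-k-1) = a^i" by (metis power_add)
      then show "scale (- coeff p i / coeff p k) (a^(Suc k) * a^(i-k-1)) = scale (- 1 / coeff p k) (scale (coeff p i) (a^i))"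
        by simp
    qed simp
    also have "\<dots> = scale (- 1 / coeff p k) (\<Sum>i\<in>{k<..d}. scale (coeff p i) (a^i))"
      by (simp add: scale_sum_right)
    also have "\<dots> = scale (- 1 / coeff p k) (- scale (coeff p k) (a^k))"
      using eq0 by (metis add.commute add_eq_0_iff)
    also have "\<dots> = a^k" using ck by simp
    finally show ?thesis .
  qed
  have comm: "a * w = w * a"
    unfolding w_def by (simp add: sum_distrib_left sum_distrib_right mr[symmetric] ml[symmetric] power_commutes)
  have gen: "a^(k+n) * w^n = a^k" for n
  proof (induct n)
    case (Suc n)
    have "a^(k + Suc n) = a^n * a^(Suc k)" by (metis add.commute add_Suc_right power_add)
    then have "a^(k + Suc n) * w^(Suc n) = a^n * (a^(Suc k) * w) * w^n"
      by (simp add: mult.assoc)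
    also have "\<dots> = a^n * a^k * w^n" using aw by simp
    also have "\<dots> = a^(k+n) * w^n" by (simp add: power_add[symmetric] add.commute)
    finally show ?case using Suc by simp
  qed simp
  define K where "K = Suc k"
  have genK: "a^(K+n) * w^n = a^K" for n
    using gen[of n] unfolding K_def by (simp add: mult.assoc)
  define S where "S = span (range (\<lambda>j. a^(Suc j)))"
  have SV: "S \<subseteq> V" unfolding S_def using pw V by (intro span_minimal) auto
  have Sw: "x \<in> S \<Longrightarrow> x * w \<in> S" for x
    unfolding S_def
  proof (induct rule: span_induct)
    case base
    show ?case unfolding subspace_def
      by (auto simp: distrib_right ml[symmetric] span_zero span_add span_scale)
  next
    case (step x)
    then obtain j where x: "x = a^(Suc j)" by auto
    have "x * w = (\<Sum>i\<in>{k<..d}. scale (- coeff p i / coeff p k) (a^(Suc j) * a^(i-k-1)))"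
      unfolding w_def x by (simp add: sum_distrib_left mr)
    also have "\<dots> \<in> span (range (\<lambda>j. a^(Suc j)))"
      by (intro span_sum span_scale span_base) (metis power_add rangeI add_Suc)
    finally show ?case .
  qed
  have Swi: "a^(Suc j) * w^i \<in> S" for i j
  proof (induct i)
    case 0 then show ?case unfolding S_def by (auto intro: span_base)
  next
    case (Suc i)
    have "a^(Suc j) * w^(Suc i) = (a^(Suc j) * w^i) * w" by (simp only: power_Suc2 mult.assoc)
    then show ?case using Sw[OF Suc] by simp
  qed
  define e where "e = a^K * w^K"
  have eS: "e \<in> V" using Swi[of k K] SV unfolding e_def K_def by auto
  have "e * e = a^K * (a^K * w^K) * w^K" unfolding e_def
    using pow_comm[OF comm[symmetric], of K K] by (metis mult.assoc)
  also have "\<dots> = e" unfolding e_def using genK[of K] by (simp add: power_add mult.assoc)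
  finally have "e = 0" using idem eS by blast
  then have "a^K = 0" using genK[of K] unfolding e_def by (simp add: power_add mult.assoc)
  then show ?thesis by blast
qed

lemma idem_pow: "e*e = e \<Longrightarrow> m \<ge> 1 \<Longrightarrow> e^m = (e::'a)"
proof (induct m)
  case (Suc m) then show ?case by (cases "m = 0") (auto simp: power_Suc2)
qed simp

lemma left_range: "left_ideal scale (range (\<lambda>b. b*e))"
proof -
  have "0 \<in> range (\<lambda>b. b*e)" by (rule range_eqI[where x=0]) simp
  moreover have "x*e + y*e \<in> range (\<lambda>b. b*e)" for x y by (rule range_eqI[where x="x+y"]) (simp add: distrib_right)
  moreover have "scale c (x*e) \<in> range (\<lambda>b. b*e)" for c x by (rule range_eqI[where x="scale c x"]) (simp add: ml)
  moreover have "b*(x*e) \<in> range (\<lambda>b. b*e)" for x b by (rule range_eqI[where x="b*x"]) (simp add: mult.assoc)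
  ultimately show ?thesis unfolding left_ideal_def subspace_def by auto
qed

lemma right_range: "right_ideal scale (range (\<lambda>b. e*b))"
proof -
  have "0 \<in> range (\<lambda>b. e*b)" by (rule range_eqI[where x=0]) simp
  moreover have "e*x + e*y \<in> range (\<lambda>b. e*b)" for x y by (rule range_eqI[where x="x+y"]) (simp add: distrib_left)
  moreover have "scale c (e*x) \<in> range (\<lambda>b. e*b)" for c x by (rule range_eqI[where x="scale c x"]) (simp add: mr)
  moreover have "e*x*b \<in> range (\<lambda>b. e*b)" for x b by (rule range_eqI[where x="x*b"]) (simp add: mult.assoc)
  ultimately show ?thesis unfolding right_ideal_def subspace_def by auto
qed

lemma two_span: "two_sided_ideal scale (span (range (\<lambda>(b,c). b*e*c)))"
proof -
  let ?G = "range (\<lambda>(b,c). b*e*c)"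
  have l: "d * x \<in> span ?G" if "x \<in> span ?G" for d x
    using that
  proof (induct rule: span_induct)
    case base show ?case unfolding subspace_def
      by (auto simp: span_zero distrib_left mr[symmetric] span_add span_scale)
  next
    case (step x)
    then obtain b c where "x = b*e*c" by auto
    then have "d*x = (d*b)*e*c" by (simp add: mult.assoc)
    then show ?case by (auto intro!: span_base)
  qed
  have r: "x * d \<in> span ?G" if "x \<in> span ?G" for d x
    using that
  proof (induct rule: span_induct)
    case base show ?case unfolding subspace_def
      by (auto simp: span_zero distrib_right ml[symmetric] span_add span_scale)
  next
    case (step x)
    then obtain b c where "x = b*e*c" by auto
    then have "x*d = b*e*(c*d)" by (simp add: mult.assoc)
    then show ?case by (auto intro!: span_base)
  qed
  show ?thesis unfolding two_sided_ideal_def left_ideal_def right_ideal_def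
    using l r by auto
qed

lemma fwd:
  assumes V: "subspace V" and I: "I_theta t scale V = {0}" and M: "theta_mathieu t V"
    and eV: "e \<in> V" and ee: "e*e = e"
  shows "e = 0"
proof -
  have pw: "\<forall>m\<ge>1. e^m \<in> V" using idem_pow[OF ee] eV by simp
  have LI: "I_theta t scale V \<supseteq> range (\<lambda>b. b*e)" if LM: "left_mathieu V" "t = LeftT \<or> t = PreTwoSidedT"
  proof -
    have "b*e \<in> V" for b
    proof -
      obtain N where "\<forall>m\<ge>N. b*e^m \<in> V" using LM(1) pw unfolding left_mathieu_def by blast
      then show ?thesis using idem_pow[OF ee, of "max N 1"] by (metis max.cobounded1 max.cobounded2)
    qed
    then have sub: "range (\<lambda>b. b*e) \<subseteq> V" by auto
    show ?thesis using that(2) left_range[of e] sub unfolding I_theta_def theta_ideal_def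
      by (auto intro!: span_base)
  qed
  have RI: "I_theta t scale V \<supseteq> range (\<lambda>b. e*b)" if RM: "right_mathieu V" "t = RightT"
  proof -
    have "e*b \<in> V" for b
    proof -
      obtain N where "\<forall>m\<ge>N. e^m*b \<in> V" using RM(1) pw unfolding right_mathieu_def by blast
      then show ?thesis using idem_pow[OF ee, of "max N 1"] by (metis max.cobounded1 max.cobounded2)
    qed
    then have sub: "range (\<lambda>b. e*b) \<subseteq> V" by auto
    show ?thesis using that(2) right_range[of e] sub unfolding I_theta_def theta_ideal_def
      by (auto intro!: span_base)
  qed
  have TI: "I_theta t scale V \<supseteq> span (range (\<lambda>(b,c). b*e*c))" if TM: "two_sided_mathieu V" "t = TwoSidedT"
  proof -
    have "b*e*c \<in> V" for b c
    proof -
      obtain N where "\<forall>m\<ge>N. b*e^m*c \<in> V" using TM(1) pw unfolding two_sided_mathieu_def by blast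
      then show ?thesis using idem_pow[OF ee, of "max N 1"] by (metis max.cobounded1 max.cobounded2)
    qed
    then have "range (\<lambda>(b,c). b*e*c) \<subseteq> V" by auto
    then have sub: "span (range (\<lambda>(b,c). b*e*c)) \<subseteq> V" using V by (rule span_minimal)
    show ?thesis using that(2) two_span[of e] sub unfolding I_theta_def theta_ideal_def
      by (auto intro!: span_base)
  qed
  have e1: "e \<in> range (\<lambda>b. b*e)" by (rule range_eqI[where x=1]) simp
  have e2: "e \<in> range (\<lambda>b. e*b)" by (rule range_eqI[where x=1]) simp
  have e3: "e \<in> span (range (\<lambda>(b,c). b*e*c))"
    by (rule span_base, rule range_eqI[where x="(1,1)"]) simp
  show ?thesis
  proof (cases t)
    case LeftT
    then have "left_mathieu V" using M unfolding theta_mathieu_def by simp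
    then show ?thesis using LI[of] LeftT e1 I by blast
  next
    case RightT
    then have "right_mathieu V" using M unfolding theta_mathieu_def by simp
    then show ?thesis using RI RightT e2 I by blast
  next
    case PreTwoSidedT
    then have "left_mathieu V" using M unfolding theta_mathieu_def by simp
    then show ?thesis using LI PreTwoSidedT e1 I by blast
  next
    case TwoSidedT
    then have "two_sided_mathieu V" using M unfolding theta_mathieu_def by simp
    then show ?thesis using TI TwoSidedT e3 I by blast
  qed
qed

lemma bwd:
  assumes V: "subspace V" and A: "\<forall>a\<in>radical V. algebraic_elem scale a"
    and idem: "\<forall>e\<in>V. idempotent e \<longrightarrow> e = 0"
  shows "theta_mathieu t V"
proof -
  have nl: "\<exists>k. \<forall>m\<ge>k. a^m = 0" if pwa: "\<forall>m\<ge>1. a^m \<in> V" for a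
  proof -
    have "a \<in> radical V" using pwa unfolding radical_def by blast
    then obtain p where p: "p \<noteq> 0" "poly_eval scale p a = 0" using A unfolding algebraic_elem_def by blast
    have id2: "\<forall>e\<in>V. e*e = e \<longrightarrow> e = 0" using idem unfolding idempotent_def by blast
    obtain k where k: "a^k = 0" using nil[OF V id2 pwa p(1)] p(2) unfolding poly_eval_def by blast
    have "a^m = 0" if "m \<ge> k" for m
    proof -
      have "a^m = a^k * a^(m-k)" using that by (metis le_add_diff_inverse power_add)
      then show ?thesis using k by simp
    qed
    then show ?thesis by blast
  qed
  have z: "0 \<in> V" using V by (rule subspace_0)
  have "left_mathieu V" unfolding left_mathieu_def using nl z by (metis mult_zero_right)
  moreover have "right_mathieu V" unfolding right_mathieu_def using nl z by (metis mult_zero_left)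
  moreover have "two_sided_mathieu V" unfolding two_sided_mathieu_def using nl z by (metis mult_zero_right mult_zero_left)
  ultimately show ?thesis unfolding theta_mathieu_def by (cases t) auto
qed

end

theorem proposition4p5:
  fixes scale :: "'k::field \<Rightarrow> 'a::ring_1 \<Rightarrow> 'a"
    and t :: mtype
  assumes alg: "is_algebra scale"
  shows "(\<forall>V. module.subspace scale V \<and>
              (\<forall>a\<in>radical V. algebraic_elem scale a) \<and>
              I_theta t scale V = {0}
            \<longrightarrow> (theta_mathieu t V \<longleftrightarrow> (\<forall>e\<in>V. idempotent e \<longrightarrow> e = 0)))
       \<and> (t \<noteq> PreTwoSidedT \<and> algebraic_algebra scale \<and>
            (\<forall>I. theta_ideal t scale I \<longrightarrow> I = {0} \<or> I = UNIV)
          \<longrightarrow> (\<forall>M. module.subspace scale M \<and> M \<noteq> {0} \<and> M \<noteq> UNIV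
                 \<longrightarrow> (theta_mathieu t M \<longleftrightarrow> (\<forall>e\<in>M. idempotent e \<longrightarrow> e = 0))))"
proof -
  have "alg scale" unfolding alg_def alg_axioms_def using alg unfolding is_algebra_def by blast
  then interpret alg scale .
  have P1: "theta_mathieu t V \<longleftrightarrow> (\<forall>e\<in>V. idempotent e \<longrightarrow> e = 0)"
    if "subspace V" "\<forall>a\<in>radical V. algebraic_elem scale a" "I_theta t scale V = {0}" for V
    using fwd[OF that(1,3)] bwd[OF that(1,2)] unfolding idempotent_def by blast
  moreover have "theta_mathieu t M \<longleftrightarrow> (\<forall>e\<in>M. idempotent e \<longrightarrow> e = 0)"
    if H: "t \<noteq> PreTwoSidedT" "algebraic_algebra scale" "\<forall>I. theta_ideal t scale I \<longrightarrow> I = {0} \<or> I = UNIV"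
      and M: "subspace M" "M \<noteq> {0}" "M \<noteq> UNIV" for M
  proof (rule P1[OF M(1)])
    show "\<forall>a\<in>radical M. algebraic_elem scale a" using H(2) unfolding algebraic_algebra_def by blast
    have "\<Union>{I. theta_ideal t scale I \<and> I \<subseteq> M} \<subseteq> {0}" using H(3) M(3) by blast
    then have "span (\<Union>{I. theta_ideal t scale I \<and> I \<subseteq> M}) \<subseteq> {0}"
      by (intro span_minimal) auto
    then show "I_theta t scale M = {0}" using H(1) span_zero unfolding I_theta_def by auto
  qed
  ultimately show ?thesis by blast
qed

end
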